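(* Let $p$ be a probability rule for quantum many-worlds theory satisfying Axioms (A1)–(A3). Then for every allowed state $v=\sum_n v_n\lvert n\rangle$ and every $n\ge0$, $p_n(v)=|v_n|^2$.
   Context: Quantum many-worlds theory is defined as follows. The worlds are the vectors $\lvert n\rangle$, $n\in\{0,1,2,\dots\}$, of a countably infinite orthonormal basis of a complex Hilbert space. The allowed states are the vectors $v=\sum_n v_n\lvert n\rangle$ with $\sum_n|v_n|^2=1$, where $v_n=\langle n\vert v\rangle$ is the amplitude of world $n$. The allowed transformations are all unitary operators $T$, with matrix elements $T_{ij}=\langle i\rvert T\lvert j\rangle$. A probability rule assigns to each allowed state $v$ a sequence $(p_n(v))_{n\ge 0}$ of nonnegative reals with $\sum_n p_n(v)=1$. The axioms are: (A1) Present state dependence: $p_n$ depends only on the present state $v$, so $p$ is a function of the state alone. (A2) Weak connection with amplitudes: for every allowed state $v$, $v_n=0$ implies $p_n(v)=0$. (A3) Weak connection with transformations: for every allowed state $v$ and allowed transformation $T$, and every partition of $\{0,1,2,\dots\}$ into subsets $\mathcal S_k$ such that $T_{ij}=0$ whenever $i$ and $j$ lie in different subsets, we have $\sum_{n\in\mathcal S_k}p_n(v)=\sum_{n\in\mathcal S_k}p_n(Tv)$ for every $k$. *)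

theory Defs
  imports "HOL-Analysis.Analysis" "HOL-Library.Disjoint_Sets"
begin

text \<open>Vectors of the Hilbert space with orthonormal basis |0>,|1>,...: amplitude sequences
  in l^2, represented as functions nat => complex.\<close>

definition sq_summable :: "(nat \<Rightarrow> complex) \<Rightarrow> bool" where
  "sq_summable v \<longleftrightarrow> summable (\<lambda>n. (cmod (v n))^2)"

definition sqnorm :: "(nat \<Rightarrow> complex) \<Rightarrow> real" where
  "sqnorm v = (\<Sum>n. (cmod (v n))^2)"

definition allowed_state :: "(nat \<Rightarrow> complex) \<Rightarrow> bool" where
  "allowed_state v \<longleftrightarrow> sq_summable v \<and> sqnorm v = 1"

definition ket :: "nat \<Rightarrow> nat \<Rightarrow> complex" where
  "ket j = (\<lambda>k. if k = j then 1 else 0)"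

text \<open>Unitary operators on l^2: linear, norm preserving, surjective maps of l^2
  (values outside l^2 are irrelevant).\<close>
definition unitary_op :: "((nat \<Rightarrow> complex) \<Rightarrow> (nat \<Rightarrow> complex)) \<Rightarrow> bool" where
  "unitary_op T \<longleftrightarrow>
     (\<forall>v w (a::complex) b. sq_summable v \<longrightarrow> sq_summable w \<longrightarrow>
         T (\<lambda>n. a * v n + b * w n) = (\<lambda>n. a * T v n + b * T w n)) \<and>
     (\<forall>v. sq_summable v \<longrightarrow> sq_summable (T v) \<and> sqnorm (T v) = sqnorm v) \<and>
     (\<forall>w. sq_summable w \<longrightarrow> (\<exists>v. sq_summable v \<and> T v = w))"

definition matrix_elem :: "((nat \<Rightarrow> complex) \<Rightarrow> (nat \<Rightarrow> complex)) \<Rightarrow> nat \<Rightarrow> nat \<Rightarrow> complex" where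
  "matrix_elem T i j = T (ket j) i"

text \<open>A probability rule assigns to each allowed state a probability sequence.
  Axiom A1 is built in: p is a function of the present state only.\<close>
definition probability_rule :: "((nat \<Rightarrow> complex) \<Rightarrow> nat \<Rightarrow> real) \<Rightarrow> bool" where
  "probability_rule p \<longleftrightarrow>
     (\<forall>v. allowed_state v \<longrightarrow> (\<forall>n. p v n \<ge> 0) \<and> p v sums 1)"

definition axiom_A2 :: "((nat \<Rightarrow> complex) \<Rightarrow> nat \<Rightarrow> real) \<Rightarrow> bool" where
  "axiom_A2 p \<longleftrightarrow> (\<forall>v n. allowed_state v \<longrightarrow> v n = 0 \<longrightarrow> p v n = 0)"

definition axiom_A3 :: "((nat \<Rightarrow> complex) \<Rightarrow> nat \<Rightarrow> real) \<Rightarrow> bool" where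
  "axiom_A3 p \<longleftrightarrow>
     (\<forall>v T P. allowed_state v \<longrightarrow> unitary_op T \<longrightarrow> partition_on UNIV P \<longrightarrow>
        (\<forall>S\<in>P. \<forall>S'\<in>P. S \<noteq> S' \<longrightarrow> (\<forall>i\<in>S. \<forall>j\<in>S'. matrix_elem T i j = 0)) \<longrightarrow>
        (\<forall>S\<in>P. (\<Sum>\<^sub>\<infinity>n\<in>S. p v n) = (\<Sum>\<^sub>\<infinity>n\<in>S. p (T v) n)))"

end

theory Submission
  imports Defs
begin


definition ip :: "(nat \<Rightarrow> complex) \<Rightarrow> (nat \<Rightarrow> complex) \<Rightarrow> complex" where
  "ip u x = (\<Sum>k. cnj (u k) * x k)"

lemma sq_aux: "(p + q)^2 \<le> 2 * p^2 + 2 * (q::real)^2"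
proof -
  have "0 \<le> (p - q)^2" by simp
  thus ?thesis by (simp add: power2_eq_square algebra_simps)
qed

lemma sq_aux2: "0 \<le> p \<Longrightarrow> 0 \<le> q \<Longrightarrow> p * q \<le> p^2 + (q::real)^2"
proof -
  assume "0 \<le> p" "0 \<le> q"
  hence "0 \<le> p * q" by simp
  moreover have "0 \<le> (p - q)^2" by simp
  ultimately show ?thesis by (simp add: power2_eq_square algebra_simps)
qed

lemma sq_summable_lin:
  assumes "sq_summable u" "sq_summable x"
  shows "sq_summable (\<lambda>k. a * u k + b * x k)"
proof -
  have S: "summable (\<lambda>k. 2 * (cmod a)^2 * (cmod (u k))^2 + 2 * (cmod b)^2 * (cmod (x k))^2)"
    using assms unfolding sq_summable_def
    by (intro summable_add summable_mult) auto
  have B: "norm ((cmod (a * u k + b * x k))^2) \<le> 2 * (cmod a)^2 * (cmod (u k))^2 + 2 * (cmod b)^2 * (cmod (x k))^2" for k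
  proof -
    have "cmod (a * u k + b * x k) \<le> cmod a * cmod (u k) + cmod b * cmod (x k)"
      using norm_triangle_ineq[of "a*u k" "b*x k"] by (simp add: norm_mult)
    hence "(cmod (a * u k + b * x k))^2 \<le> (cmod a * cmod (u k) + cmod b * cmod (x k))^2"
      by (simp add: power_mono)
    also have "\<dots> \<le> 2 * (cmod a)^2 * (cmod (u k))^2 + 2 * (cmod b)^2 * (cmod (x k))^2"
      using sq_aux[of "cmod a * cmod (u k)" "cmod b * cmod (x k)"] by (simp add: power_mult_distrib)
    finally show ?thesis by simp
  qed
  show ?thesis unfolding sq_summable_def
    by (rule summable_comparison_test[OF _ S]) (use B in blast)
qed

lemma ip_summable:
  assumes "sq_summable u" "sq_summable x"
  shows "summable (\<lambda>k. cnj (u k) * x k)"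
proof (rule summable_norm_cancel)
  have S: "summable (\<lambda>k. (cmod (u k))^2 + (cmod (x k))^2)"
    using assms unfolding sq_summable_def by (intro summable_add)
  have B: "norm (norm (cnj (u k) * x k)) \<le> (cmod (u k))^2 + (cmod (x k))^2" for k
  proof -
    have "cmod (u k) * cmod (x k) \<le> (cmod (u k))^2 + (cmod (x k))^2"
      by (rule sq_aux2) auto
    thus ?thesis by (simp add: norm_mult)
  qed
  show "summable (\<lambda>k. norm (cnj (u k) * x k))"
    by (rule summable_comparison_test[OF _ S]) (use B in blast)
qed

lemma ip_sums: "sq_summable u \<Longrightarrow> sq_summable x \<Longrightarrow> (\<lambda>k. cnj (u k) * x k) sums ip u x"
  unfolding ip_def by (intro summable_sums ip_summable)

lemma ip_self: "sq_summable x \<Longrightarrow> ip x x = of_real (sqnorm x)"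
proof -
  assume a: "sq_summable x"
  have "(\<lambda>k. of_real ((cmod (x k))^2)) sums (of_real (sqnorm x) :: complex)"
    using a unfolding sq_summable_def sqnorm_def
    by (intro sums_of_real summable_sums)
  moreover have "(\<lambda>k. of_real ((cmod (x k))^2)) = (\<lambda>k. cnj (x k) * x k)"
    by (intro ext) (unfold complex_norm_square, simp add: mult.commute)
  ultimately have "(\<lambda>k. cnj (x k) * x k) sums (of_real (sqnorm x))" by simp
  thus ?thesis using sums_unique2[OF ip_sums[OF a a]] by blast
qed

lemma ip_lin_right:
  assumes "sq_summable u" "sq_summable x" "sq_summable y"
  shows "ip u (\<lambda>k. a * x k + b * y k) = a * ip u x + b * ip u y"
proof -
  have "(\<lambda>k. a * (cnj (u k) * x k) + b * (cnj (u k) * y k)) sums (a * ip u x + b * ip u y)"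
    using assms by (intro sums_add sums_mult ip_sums)
  moreover have "(\<lambda>k. cnj (u k) * (a * x k + b * y k)) sums ip u (\<lambda>k. a * x k + b * y k)"
    using assms by (intro ip_sums sq_summable_lin)
  moreover have "(\<lambda>k. cnj (u k) * (a * x k + b * y k)) = (\<lambda>k. a * (cnj (u k) * x k) + b * (cnj (u k) * y k))"
    by (simp add: algebra_simps)
  ultimately show ?thesis by (metis sums_unique2)
qed

lemma ip_conj:
  assumes "sq_summable u" "sq_summable x"
  shows "ip x u = cnj (ip u x)"
proof -
  have 1: "(\<lambda>k. cnj (cnj (u k) * x k)) sums cnj (ip u x)"
    using sums_cnj[THEN iffD2, OF ip_sums[OF assms]] .
  have 3: "(\<lambda>k. cnj (cnj (u k) * x k)) = (\<lambda>k. cnj (x k) * u k)" by (simp add: mult.commute)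
  have "(\<lambda>k. cnj (x k) * u k) sums cnj (ip u x)" using 1 unfolding 3 .
  moreover have "(\<lambda>k. cnj (x k) * u k) sums ip x u" using ip_sums[OF assms(2,1)] .
  ultimately show ?thesis by (rule sums_unique2[symmetric])
qed

lemma ip_lin_left:
  assumes "sq_summable u" "sq_summable x" "sq_summable y"
  shows "ip (\<lambda>k. a * x k + b * y k) u = cnj a * ip x u + cnj b * ip y u"
  using assms by (simp add: ip_conj[of u] sq_summable_lin ip_lin_right)

lemma sqnorm_ip: "sq_summable x \<Longrightarrow> sqnorm x = Re (ip x x)"
  by (simp add: ip_self)

lemma sqnorm_nonneg: "sq_summable x \<Longrightarrow> 0 \<le> sqnorm x"
  unfolding sq_summable_def sqnorm_def by (intro suminf_nonneg) auto



definition H :: "(nat \<Rightarrow> complex) \<Rightarrow> (nat \<Rightarrow> complex) \<Rightarrow> (nat \<Rightarrow> complex)" where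
  "H u x = (\<lambda>k. 1 * x k + (- (2 * ip u x / of_real (sqnorm u))) * u k)"

lemma H_summ: "sq_summable u \<Longrightarrow> sq_summable x \<Longrightarrow> sq_summable (H u x)"
  unfolding H_def by (rule sq_summable_lin)

lemma H_lin:
  assumes "sq_summable u" "sq_summable v" "sq_summable w"
  shows "H u (\<lambda>n. a * v n + b * w n) = (\<lambda>n. a * H u v n + b * H u w n)"
  using assms unfolding H_def by (auto simp: ip_lin_right algebra_simps add_divide_distrib diff_divide_distrib)

lemma H_norm_ip:
  assumes u: "sq_summable u" and x: "sq_summable x"
  shows "ip (H u x) (H u x) = ip x x" "ip u (H u x) = ip u x + (- (2 * ip u x / of_real (sqnorm u))) * ip u u"
proof -
  define z where "z = ip u x"
  define N where "N = sqnorm u"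
  define al where "al = - (2 * z / of_real N)"
  have Hd: "H u x = (\<lambda>k. 1 * x k + al * u k)" by (simp add: H_def al_def z_def N_def)
  have hs: "sq_summable (H u x)" using H_summ[OF u x] .
  have ux: "ip x u = cnj z" using ip_conj[OF u x] z_def by simp
  have uu: "ip u u = of_real N" using ip_self[OF u] N_def by simp
  have e1: "ip (H u x) (H u x) = ip x (H u x) + cnj al * ip u (H u x)"
    using ip_lin_left[OF hs x u, of 1 al] unfolding Hd[symmetric] by simp
  have e2: "ip x (H u x) = ip x x + al * ip x u"
    unfolding Hd using ip_lin_right[OF x x u, of 1 al] by simp
  have e3: "ip u (H u x) = ip u x + al * ip u u"
    unfolding Hd using ip_lin_right[OF u x u, of 1 al] by simp
  show "ip u (H u x) = ip u x + (- (2 * ip u x / of_real (sqnorm u))) * ip u u"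
    using e3 by (simp add: al_def z_def N_def)
  have ca: "cnj al = - (2 * cnj z / of_real N)" by (simp add: al_def)
  have "ip (H u x) (H u x) = ip x x + al * cnj z + cnj al * (z + al * of_real N)"
    using e1 e2 e3 ux uu z_def by simp
  also have "\<dots> = ip x x"
  proof (cases "N = 0")
    case True thus ?thesis by (simp add: al_def)
  next
    case False
    hence "(of_real N :: complex) \<noteq> 0" by simp
    thus ?thesis unfolding ca al_def by (simp add: field_simps)
  qed
  finally show "ip (H u x) (H u x) = ip x x" .
qed

lemma H_norm:
  assumes u: "sq_summable u" and x: "sq_summable x"
  shows "sqnorm (H u x) = sqnorm x"
  using H_norm_ip(1)[OF u x] sqnorm_ip[OF x] sqnorm_ip[OF H_summ[OF u x]] by simp

lemma H_invol:
  assumes u: "sq_summable u" and x: "sq_summable x"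
  shows "H u (H u x) = x"
proof (cases "sqnorm u = 0")
  case True thus ?thesis by (simp add: H_def)
next
  case False
  hence nz: "(of_real (sqnorm u) :: complex) \<noteq> 0" by simp
  have "ip u x + ip u (H u x) = 0"
    using H_norm_ip(2)[OF u x] ip_self[OF u] nz by (simp add: field_simps)
  hence "ip u (H u x) = - ip u x" by (simp only: add_eq_0_iff)
  hence "H u (H u x) = (\<lambda>k. H u x k + 2 * ip u x / of_real (sqnorm u) * u k)"
    by (simp add: H_def)
  also have "\<dots> = x" by (simp add: H_def)
  finally show ?thesis .
qed

lemma H_unitary: "sq_summable u \<Longrightarrow> unitary_op (H u)"
  unfolding unitary_op_def
  by (metis H_lin H_norm H_summ H_invol)



lemma fin_supp:
  assumes "finite F" "\<And>k. k \<notin> F \<Longrightarrow> x k = 0"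
  shows "sq_summable x" "sqnorm x = (\<Sum>k\<in>F. (cmod (x k))^2)"
  using assms unfolding sq_summable_def sqnorm_def
  by (auto intro: summable_finite suminf_finite)

lemma ip_fin:
  assumes "finite F" "\<And>k. k \<notin> F \<Longrightarrow> x k = 0"
  shows "ip x y = (\<Sum>k\<in>F. cnj (x k) * y k)"
  unfolding ip_def using assms by (intro suminf_finite) auto

lemma ip_ket: "ip u (ket j) = cnj (u j)"
proof -
  have "ip u (ket j) = (\<Sum>k\<in>{j}. cnj (u k) * ket j k)"
    unfolding ip_def by (intro suminf_finite) (auto simp: ket_def)
  thus ?thesis by (simp add: ket_def)
qed

definition D :: "(nat \<Rightarrow> complex) \<Rightarrow> (nat \<Rightarrow> complex) \<Rightarrow> (nat \<Rightarrow> complex)" where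
  "D ph x = (\<lambda>k. ph k * x k)"

lemma D_unitary:
  assumes ph: "\<And>k. cmod (ph k) = 1"
  shows "unitary_op (D ph)"
proof -
  have n: "(\<lambda>k. (cmod (D ph x k))^2) = (\<lambda>k. (cmod (x k))^2)" for x
    by (simp add: D_def norm_mult ph)
  have inv: "D ph (D (\<lambda>k. cnj (ph k)) w) = w" for w
  proof -
    have pc: "ph k * cnj (ph k) = 1" for k
      using complex_norm_square[of "ph k"] ph[of k] by simp
    have "ph k * (cnj (ph k) * w k) = w k" for k
      by (simp add: mult.assoc[symmetric] pc)
    thus ?thesis unfolding D_def by (intro ext)
  qed
  have s: "sq_summable (D (\<lambda>k. cnj (ph k)) w) = sq_summable w" for w
    unfolding sq_summable_def by (simp add: D_def norm_mult ph)
  have l: "D ph (\<lambda>n. a * v n + b * w n) = (\<lambda>n. a * D ph v n + b * D ph w n)" for v w a b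
    by (simp add: D_def algebra_simps)
  show ?thesis unfolding unitary_op_def
  proof (intro conjI allI impI)
    fix v assume "sq_summable v"
    thus "sq_summable (D ph v)" "sqnorm (D ph v) = sqnorm v"
      unfolding sq_summable_def sqnorm_def n by simp_all
  next
    fix w assume w: "sq_summable w"
    show "\<exists>v. sq_summable v \<and> D ph v = w"
      using w s inv by blast
  qed (rule l)
qed

lemma A3_block:
  assumes A3: "axiom_A3 p" and v: "allowed_state v" and T: "unitary_op T"
    and blk: "\<And>i j. i \<noteq> j \<Longrightarrow> i = n \<or> j = n \<Longrightarrow> matrix_elem T i j = 0"
  shows "p v n = p (T v) n"
proof -
  let ?P = "{{n}, UNIV - {n}}"
  have ne: "UNIV - {n} \<noteq> {}"
  proof
    assume "UNIV - {n} = {}"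
    hence "Suc n \<in> {n}" by (metis Diff_iff UNIV_I empty_iff)
    thus False by simp
  qed
  have p1: "\<Union>?P = UNIV" by blast
  have p2: "disjoint ?P" unfolding disjoint_def by blast
  have p3: "{} \<notin> ?P" using ne by simp
  have part: "partition_on UNIV ?P"
    unfolding partition_on_def using p1 p2 p3 by blast
  have b: "\<forall>S\<in>?P. \<forall>S'\<in>?P. S \<noteq> S' \<longrightarrow> (\<forall>i\<in>S. \<forall>j\<in>S'. matrix_elem T i j = 0)"
    using blk by auto
  have "\<forall>S\<in>?P. infsum (p v) S = infsum (p (T v)) S"
    using mp[OF mp[OF mp[OF mp[OF spec[OF spec[OF spec[OF A3[unfolded axiom_A3_def], of v], of T], of ?P] v] T] part] b] .
  hence "infsum (p v) {n} = infsum (p (T v)) {n}" by (rule bspec) simp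
  thus ?thesis by simp
qed



definition canon :: "nat \<Rightarrow> real \<Rightarrow> nat \<Rightarrow> complex" where
  "canon n a = (\<lambda>k. if k = n then of_real a else if k = Suc n then of_real (sqrt (1 - a^2)) else 0)"

lemma cnj_self: "cnj z * z = of_real ((cmod z)^2)"
  by (subst complex_norm_square) (rule mult.commute)

lemma reduce:
  assumes A3: "axiom_A3 p" and v: "allowed_state v"
  shows "p v n = p (canon n (cmod (v n))) n"
proof -
  define m where "m = Suc n"
  define a where "a = cmod (v n)"
  define c where "c = sqrt (1 - a^2)"
  define s where "s = (if v m = 0 then 1 else v m / of_real (cmod (v m)))"
  define w where "w = (\<lambda>k. if k = n then v n else if k = m then of_real c * s else 0)"
  define u where "u = (\<lambda>k. 1 * v k + (-1) * w k)"
  have mn: "m \<noteq> n" by (simp add: m_def)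
  have vs: "sq_summable v" and v1: "sqnorm v = 1" using v by (auto simp: allowed_state_def)
  have "(\<Sum>k\<in>{n}. (cmod (v k))^2) \<le> sqnorm v"
    unfolding sqnorm_def using vs unfolding sq_summable_def by (intro sum_le_suminf) auto
  hence "(cmod (v n))^2 \<le> 1" using v1 by simp
  hence a2: "a^2 \<le> 1" unfolding a_def .
  have cs: "c^2 = 1 - a^2" using a2 by (simp add: c_def)
  have c0: "0 \<le> c" using a2 by (simp add: c_def)
  have sn: "cmod s = 1" by (simp add: s_def norm_divide)
  have ss: "cnj s * s = 1" using cnj_self[of s] sn by simp
  have sv: "cnj s * v m = of_real (cmod (v m))"
  proof (cases "v m = 0")
    case False
    hence "cnj s * v m = (cnj (v m) * v m) / of_real (cmod (v m))" by (simp add: s_def)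
    also have "\<dots> = of_real (cmod (v m))" using False
      by (simp add: cnj_self power2_eq_square)
    finally show ?thesis .
  qed (simp add: s_def)
  have wsupp: "\<And>k. k \<notin> {n, m} \<Longrightarrow> w k = 0" by (simp add: w_def)
  have ws: "sq_summable w" by (rule fin_supp(1)[of "{n,m}"]) (use wsupp in auto)
  have "sqnorm w = (\<Sum>k\<in>{n,m}. (cmod (w k))^2)" by (rule fin_supp(2)) (use wsupp in auto)
  hence w1: "sqnorm w = 1"
    using mn cs c0 by (simp add: w_def norm_mult sn a_def)
  have wv: "allowed_state w" using ws w1 by (simp add: allowed_state_def)
  define r where "r = a^2 + c * cmod (v m)"
  have "ip w v = (\<Sum>k\<in>{n,m}. cnj (w k) * v k)" by (rule ip_fin) (use wsupp in auto)
  hence ipwv: "ip w v = of_real r"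
    using mn
    by (simp add: w_def r_def a_def cnj_self mult.assoc sv)
  have ipvw: "ip v w = of_real r" using ip_conj[OF ws vs] ipwv by simp
  have ipvv: "ip v v = 1" using ip_self[OF vs] v1 by simp
  have ipww: "ip w w = 1" using ip_self[OF ws] w1 by simp
  have us: "sq_summable u" unfolding u_def using vs ws by (rule sq_summable_lin)
  have ipuv: "ip u v = 1 - of_real r"
    unfolding u_def using ip_lin_left[OF vs vs ws, of 1 "-1"] ipvv ipwv by simp
  have ipvu: "ip v u = 1 - of_real r"
    unfolding u_def using ip_lin_right[OF vs vs ws, of 1 "-1"] ipvv ipvw by simp
  have ipwu: "ip w u = of_real r - 1"
    unfolding u_def using ip_lin_right[OF ws vs ws, of 1 "-1"] ipww ipwv by simp
  have ipuu: "ip u u = 2 - 2 * of_real r"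
    using ip_lin_left[OF us vs ws, of 1 "-1"] ipvu ipwu unfolding u_def[symmetric] by simp
  have key: "2 * ip u v = of_real (sqnorm u)" using ip_self[OF us] ipuu ipuv by simp
  have Hv: "H u v = w"
  proof (cases "sqnorm u = 0")
    case True
    have "\<forall>k. (cmod (u k))^2 = 0"
      using True us unfolding sqnorm_def sq_summable_def by (subst suminf_eq_zero_iff[symmetric]) auto
    hence "\<And>k. u k = 0" by simp
    hence "\<And>k. v k = w k" by (simp add: u_def)
    thus ?thesis using True by (simp add: H_def)
  next
    case False
    hence "2 * ip u v / of_real (sqnorm u) = 1" using key by simp
    thus ?thesis by (simp add: H_def u_def)
  qed
  have un: "u n = 0" by (simp add: u_def w_def)
  have "p v n = p (H u v) n"
  proof (rule A3_block[OF A3 v H_unitary[OF us]])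
    fix i j :: nat assume "i \<noteq> j" "i = n \<or> j = n"
    thus "matrix_elem (H u) i j = 0"
      unfolding matrix_elem_def H_def ip_ket using un by (auto simp: ket_def)
  qed
  hence pw: "p v n = p w n" using Hv by simp
  define ph where "ph = (\<lambda>k. if k = n then (if v n = 0 then 1 else cnj (v n) / of_real a)
                            else if k = m then cnj s else (1::complex))"
  have phn: "cmod (ph k) = 1" for k
    using sn by (auto simp: ph_def norm_divide a_def)
  have "p w n = p (D ph w) n"
  proof (rule A3_block[OF A3 wv D_unitary[OF phn]])
    fix i j :: nat assume "i \<noteq> j" "i = n \<or> j = n"
    thus "matrix_elem (D ph) i j = 0"
      by (auto simp: matrix_elem_def D_def ket_def)
  qed
  moreover have "D ph w = canon n a"
  proof (rule ext)
    fix k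
    show "D ph w k = canon n a k"
    proof (cases "k = n")
      case True
      show ?thesis
      proof (cases "v n = 0")
        case False
        have "ph n * v n = (cnj (v n) * v n) / of_real a" using False by (simp add: ph_def)
        also have "\<dots> = of_real a" using False by (simp add: cnj_self a_def power2_eq_square)
        finally show ?thesis using True by (simp add: D_def w_def canon_def)
      qed (simp add: True D_def w_def canon_def a_def)
    next
      case False
      show ?thesis
      proof (cases "k = m")
        case True
        have "cnj s * (of_real c * s) = of_real c" using ss by (simp add: algebra_simps)
        thus ?thesis using True mn by (simp add: D_def w_def canon_def ph_def c_def m_def)
      qed (use False in \<open>simp add: D_def w_def canon_def ph_def m_def\<close>)
    qed
  qed
  ultimately show ?thesis using pw by (simp add: a_def)
qed



lemma additive_id:
  fixes f :: "real \<Rightarrow> real"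
  assumes add: "\<And>s t. 0 \<le> s \<Longrightarrow> 0 \<le> t \<Longrightarrow> s + t \<le> 1 \<Longrightarrow> f (s + t) = f s + f t"
    and nn: "\<And>x. 0 \<le> x \<Longrightarrow> x \<le> 1 \<Longrightarrow> 0 \<le> f x"
    and one: "f 1 = 1"
    and x: "0 \<le> x" "x \<le> 1"
  shows "f x = x"
proof -
  have mono: "f s \<le> f y" if "0 \<le> s" "s \<le> y" "y \<le> 1" for s y
  proof -
    have "f y = f s + f (y - s)" using add[of s "y - s"] that by simp
    moreover have "0 \<le> f (y - s)" using nn that by simp
    ultimately show ?thesis by simp
  qed
  have mult: "f (real k / real N) = real k * f (1 / real N)" if "k \<le> N" "N > 0" for k N :: nat
    using that
  proof (induction k)
    case 0
    have "f 0 = f 0 + f 0" using add[of 0 0] by simp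
    thus ?case by simp
  next
    case (Suc k)
    have "real (Suc k) / real N = real k / real N + 1 / real N" by (simp add: add_divide_distrib)
    moreover have "real k / real N + 1 / real N \<le> 1"
      using Suc.prems by (simp add: add_divide_distrib[symmetric])
    ultimately have "f (real (Suc k) / real N) = f (real k / real N) + f (1 / real N)"
      using add[of "real k / real N" "1 / real N"] by simp
    thus ?case using Suc by (simp add: algebra_simps)
  qed
  have inv: "f (1 / real N) = 1 / real N" if "N > 0" for N :: nat
    using mult[of N N] that one by (simp add: field_simps)
  have frac: "f (real k / real N) = real k / real N" if "k \<le> N" "N > 0" for k N :: nat
    using mult[OF that] inv[OF that(2)] by simp
  have bound: "\<bar>f x - x\<bar> \<le> 1 / real N" if N: "N > 0" for N :: nat
  proof -
    define k where "k = nat \<lfloor>real N * x\<rfloor>"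
    have Nx: "0 \<le> real N * x" using x by simp
    have kle: "real k \<le> real N * x" using Nx by (simp add: k_def)
    have klt: "real N * x < real k + 1" using Nx by (simp add: k_def)
    have kN: "k \<le> N"
    proof -
      have "real N * x \<le> real N" using x N by (simp add: mult_left_le)
      thus ?thesis using kle by linarith
    qed
    have Npos: "real N > 0" using N by simp
    have k1: "real k / real N \<le> x" using kle Npos by (simp add: divide_le_eq mult.commute)
    have k2: "x < (real k + 1) / real N" using klt Npos by (simp add: less_divide_eq mult.commute)
    have lo: "real k / real N \<le> f x"
      using mono[of "real k / real N" x] k1 x frac[OF kN N] by simp
    have hi: "f x \<le> (real k + 1) / real N"
    proof (cases "k = N")
      case True
      hence "x = 1" using k1 x Npos by simp
      thus ?thesis using one True Npos by simp
    next
      case False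
      hence kN': "Suc k \<le> N" using kN by simp
      have "(real k + 1) / real N \<le> 1" using kN' Npos by (simp add: divide_le_eq)
      hence "f x \<le> f ((real k + 1) / real N)" using mono[of x "(real k + 1) / real N"] x k2 by simp
      also have "\<dots> = (real k + 1) / real N" using frac[OF kN' N] by (simp add: add.commute)
      finally show ?thesis .
    qed
    have "(real k + 1) / real N = real k / real N + 1 / real N" by (simp add: add_divide_distrib)
    thus ?thesis using lo hi k1 k2 by linarith
  qed
  show ?thesis
  proof (rule ccontr)
    assume "f x \<noteq> x"
    hence d: "\<bar>f x - x\<bar> > 0" by simp
    obtain N :: nat where N: "1 / \<bar>f x - x\<bar> < real N" using reals_Archimedean2 by blast
    hence Np: "N > 0" using d by (cases N) (auto simp: field_simps)
    have "1 < real N * \<bar>f x - x\<bar>" using N d by (simp add: divide_less_eq)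
    moreover have "real N * \<bar>f x - x\<bar> \<le> 1" using bound[OF Np] Np by (simp add: le_divide_eq mult.commute)
    ultimately show False by simp
  qed
qed



lemma fin_state_sum:
  assumes PR: "probability_rule p" and A2: "axiom_A2 p" and fin: "finite F"
    and supp: "\<And>k. k \<notin> F \<Longrightarrow> x k = 0" and nrm: "(\<Sum>k\<in>F. (cmod (x k))^2) = 1"
  shows "allowed_state x" "(\<Sum>k\<in>F. p x k) = 1"
proof -
  show al: "allowed_state x"
    unfolding allowed_state_def using fin_supp[OF fin supp] nrm by simp
  have s1: "p x sums 1" using PR al unfolding probability_rule_def by blast
  have z: "p x k = 0" if "k \<notin> F" for k
    using A2 al supp[OF that] unfolding axiom_A2_def by blast
  have "suminf (p x) = (\<Sum>k\<in>F. p x k)" by (rule suminf_finite[OF fin z])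
  thus "(\<Sum>k\<in>F. p x k) = 1" using sums_unique[OF s1] by simp
qed

definition G :: "((nat \<Rightarrow> complex) \<Rightarrow> nat \<Rightarrow> real) \<Rightarrow> nat \<Rightarrow> real \<Rightarrow> real" where
  "G p n t = p (canon n (sqrt t)) n"

lemma canon_allowed:
  assumes "0 \<le> t" "t \<le> 1"
  shows "allowed_state (canon n (sqrt t))"
proof -
  have supp: "\<And>k. k \<notin> {n, Suc n} \<Longrightarrow> canon n (sqrt t) k = 0" by (simp add: canon_def)
  have "sqnorm (canon n (sqrt t)) = (\<Sum>k\<in>{n, Suc n}. (cmod (canon n (sqrt t) k))^2)"
    by (rule fin_supp(2)) (use supp in auto)
  also have "\<dots> = 1" using assms by (simp add: canon_def)
  finally show ?thesis unfolding allowed_state_def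
    using fin_supp(1)[of "{n, Suc n}"] supp by auto
qed

lemma G_eq:
  assumes A3: "axiom_A3 p" and v: "allowed_state v"
  shows "p v n = G p n ((cmod (v n))^2)"
  using reduce[OF A3 v, of n] by (simp add: G_def)

lemma G0:
  assumes A2: "axiom_A2 p"
  shows "G p n 0 = 0"
  using A2 canon_allowed[of 0 n] unfolding axiom_A2_def G_def by (simp add: canon_def)

lemma G_nn:
  assumes PR: "probability_rule p" "0 \<le> t" "t \<le> 1"
  shows "0 \<le> G p n t"
  using PR canon_allowed[of t n] unfolding probability_rule_def G_def by blast

lemma three:
  assumes PR: "probability_rule p" and A2: "axiom_A2 p" and A3: "axiom_A3 p"
    and d: "n \<noteq> m" "n \<noteq> k" "m \<noteq> k"
    and st: "0 \<le> s" "0 \<le> t" "0 \<le> q" "s + t + q = 1"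
  shows "G p n s + G p m t + G p k q = 1"
proof -
  define x where "x = (\<lambda>j. if j = n then complex_of_real (sqrt s) else if j = m then of_real (sqrt t)
                       else if j = k then of_real (sqrt q) else 0)"
  have supp: "\<And>j. j \<notin> {n, m, k} \<Longrightarrow> x j = 0" by (simp add: x_def)
  have xn: "(cmod (x n))^2 = s" "(cmod (x m))^2 = t" "(cmod (x k))^2 = q"
    using d st by (auto simp: x_def)
  have "(\<Sum>j\<in>{n, m, k}. (cmod (x j))^2) = 1" using d xn st by simp
  note fs = fin_state_sum[OF PR A2 _ supp this]
  have "p x n + p x m + p x k = 1" using fs(2) d by (simp add: add.assoc)
  thus ?thesis using G_eq[OF A3 fs(1)] xn by simp
qed

theorem theorem2:
  fixes p :: "(nat \<Rightarrow> complex) \<Rightarrow> nat \<Rightarrow> real"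
  assumes "probability_rule p"
    and "axiom_A2 p"
    and "axiom_A3 p"
    and "allowed_state v"
  shows "p v n = (cmod (v n))^2"
proof -
  note PR = assms(1) and A2 = assms(2) and A3 = assms(3) and v = assms(4)
  define m where "m = Suc n"
  define k where "k = Suc (Suc n)"
  have d: "n \<noteq> m" "n \<noteq> k" "m \<noteq> k" by (auto simp: m_def k_def)
  note th = three[OF PR A2 A3]
  have add: "G p n (s + t) = G p n s + G p n t" if "0 \<le> s" "0 \<le> t" "s + t \<le> 1" for s t
  proof -
    have h1: "G p n s + G p m t + G p k (1 - s - t) = 1" using th[OF d] that by simp
    have h2: "G p n (s + t) + G p m 0 + G p k (1 - s - t) = 1" using th[OF d, of "s+t" 0] that by simp
    have h3: "G p m 0 + G p n t + G p k (1 - t) = 1"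
      using th[of m n k 0 t "1 - t"] d that by auto
    have h4: "G p m t + G p n 0 + G p k (1 - t) = 1"
      using th[of m n k t 0 "1 - t"] d that by auto
    show ?thesis using h1 h2 h3 h4 G0[OF A2, of m] G0[OF A2, of n] by simp
  qed
  have one: "G p n 1 = 1" using th[OF d, of 1 0 0] G0[OF A2, of m] G0[OF A2, of k] by simp
  have vs: "sq_summable v" and v1: "sqnorm v = 1" using v by (auto simp: allowed_state_def)
  have "(\<Sum>k\<in>{n}. (cmod (v k))^2) \<le> sqnorm v"
    unfolding sqnorm_def using vs unfolding sq_summable_def by (intro sum_le_suminf) auto
  hence y1: "(cmod (v n))^2 \<le> 1" using v1 by simp
  have "G p n ((cmod (v n))^2) = (cmod (v n))^2"
    by (rule additive_id[where f = "G p n"]) (use add G_nn[OF PR] one y1 in auto)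
  thus ?thesis using G_eq[OF A3 v] by simp
qed


end
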